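(* Let $q$ be a prime power, let $X^2+\mu X+\lambda$ be a primitive polynomial over $\mathbb F_q$, let $\bar x\in PGL_2(q)$ be the image of $\begin{pmatrix}0&1\\-\lambda&-\mu\end{pmatrix}$, $C=\langle\bar x\rangle$, and let $S\le PGL_2(q)$ be the image of the invertible upper triangular matrices. For the right action of $S$ on $C$ defined by $cs=s'c^{[s]}$ ($s'\in S$, $c^{[s]}\in C$), the stabilizer $\mathrm{Stab}_S(\bar x)=\{s\in S:\bar x^{[s]}=\bar x\}$ is isomorphic to the cyclic group $\mathbb Z_{q-1}$.
   Context: $PGL_2(q)=CS$ with $C\cap S=1$, so each product $cs$ ($c\in C$, $s\in S$) is uniquely $s'c'$ with $s'\in S$, $c'\in C$; $c^{[s]}:=c'$. *)

theory Defs
  imports "HOL-Analysis.Analysis" "HOL-Algebra.Elementary_Groups"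
    "HOL-Computational_Algebra.Polynomial"
begin

definition mat2 :: "'a \<Rightarrow> 'a \<Rightarrow> 'a \<Rightarrow> 'a \<Rightarrow> 'a::zero ^2^2" where
  "mat2 a b c d = (\<chi> i j. if i = 1 then (if j = 1 then a else b) else (if j = 1 then c else d))"

definition GL2 :: "('a::field ^2^2) set" where
  "GL2 = {A. det A \<noteq> 0}"

definition pgl_of :: "'a::field ^2^2 \<Rightarrow> ('a ^2^2) set" where
  "pgl_of A = {(\<chi> i j. c * A $ i $ j) | c. c \<noteq> 0}"

definition PGL2 :: "('a::field ^2^2) set monoid" where
  "PGL2 = \<lparr> carrier = pgl_of ` GL2,
            mult = (\<lambda>X Y. {A ** B | A B. A \<in> X \<and> B \<in> Y}),
            one = pgl_of (mat 1) \<rparr>"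

definition upper_tri_PGL2 :: "('a::field ^2^2) set set" where
  "upper_tri_PGL2 = pgl_of ` {A \<in> GL2. A $ 2 $ 1 = 0}"

text \<open>Primitive polynomial over F_q (q = CARD('a)): monic, irreducible, and a root
  (the class of X in F_q[X]/(f)) has multiplicative order q^deg f - 1, i.e.
  generates the multiplicative group of the extension field F_q[X]/(f).\<close>
definition primitive_poly :: "'a::{finite,field} poly \<Rightarrow> bool" where
  "primitive_poly f \<longleftrightarrow> lead_coeff f = 1 \<and> irreducible f \<and>
     (let N = CARD('a) ^ degree f - 1 in
        f dvd (monom 1 N - 1) \<and> (\<forall>e. 0 < e \<and> e < N \<longrightarrow> \<not> f dvd (monom 1 e - 1)))"

definition twist :: "('g, 'b) monoid_scheme \<Rightarrow> 'g set \<Rightarrow> 'g set \<Rightarrow> 'g \<Rightarrow> 'g \<Rightarrow> 'g" where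
  "twist G C S c s = (THE c'. c' \<in> C \<and> (\<exists>s'\<in>S. c \<otimes>\<^bsub>G\<^esub> s = s' \<otimes>\<^bsub>G\<^esub> c'))"

end

theory Submission
  imports Defs "HOL-Algebra.Multiplicative_Group"
begin

lemma mat2_nth [simp]:
  "mat2 a b c d $ 1 $ 1 = a" "mat2 a b c d $ 1 $ 2 = b"
  "mat2 a b c d $ 2 $ 1 = c" "mat2 a b c d $ 2 $ 2 = d"
  by (simp_all add: mat2_def)
lemma mat2_eta: "A = mat2 (A$1$1) (A$1$2) (A$2$1) (A$2$2)"
  by (simp add: mat2_def vec_eq_iff forall_2)

lemma mat2_eq_iff: "mat2 a b c d = mat2 a' b' c' d' \<longleftrightarrow> a = a' \<and> b = b' \<and> c = c' \<and> d = d'"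
  by (metis mat2_nth)

lemma mat2_mul: "mat2 a b c d ** mat2 e f g h =
   mat2 (a*e+b*g) (a*f+b*h) (c*e+d*g) (c*f+(d::'a::comm_ring_1)*h)"
  by (simp add: mat2_def matrix_matrix_mult_def vec_eq_iff forall_2 sum_2)

lemma det_mat2: "det (mat2 a b c (d::'a::comm_ring_1)) = a*d - b*c"
  by (simp add: det_2)

lemma mat1_mat2: "(mat 1 :: 'a::comm_ring_1^2^2) = mat2 1 0 0 1"
  by (simp add: mat2_def mat_def vec_eq_iff forall_2)


definition smat :: "'a::field \<Rightarrow> 'a^2^2 \<Rightarrow> 'a^2^2" where
  "smat c A = (\<chi> i j. c * A $ i $ j)"

lemma smat_mat2: "smat k (mat2 a b c d) = mat2 (k*a) (k*b) (k*c) (k*d)"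
  by (simp add: smat_def mat2_def vec_eq_iff forall_2)

lemma pgl_of_alt: "pgl_of A = {smat c A | c. c \<noteq> 0}"
  by (simp add: pgl_of_def smat_def)

lemma smat_1 [simp]: "smat 1 A = A" by (simp add: smat_def vec_eq_iff)
lemma smat_smat [simp]: "smat c (smat d A) = smat (c*d) A" by (simp add: smat_def vec_eq_iff)

lemma smat_mul: "smat c A ** smat d B = smat (c*d) (A ** B)"
  by (simp add: smat_def matrix_matrix_mult_def vec_eq_iff sum_distrib_left mult_ac)


lemma in_pgl_of: "A \<in> pgl_of B \<longleftrightarrow> (\<exists>c. c \<noteq> 0 \<and> A = smat c B)"
  unfolding pgl_of_alt by blast

lemma self_in_pgl_of: "A \<in> pgl_of A"
  unfolding in_pgl_of by (rule exI[of _ 1]) simp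

lemma pgl_of_eq: "pgl_of A = pgl_of B \<longleftrightarrow> (\<exists>c. c \<noteq> 0 \<and> A = smat c B)"
proof
  assume "pgl_of A = pgl_of B"
  then have "A \<in> pgl_of B" using self_in_pgl_of[of A] by simp
  then show "\<exists>c. c \<noteq> 0 \<and> A = smat c B" by (simp add: in_pgl_of)
next
  assume "\<exists>c. c \<noteq> 0 \<and> A = smat c B"
  then obtain c where c: "c \<noteq> 0" "A = smat c B" by blast
  show "pgl_of A = pgl_of B"
  proof (rule Set.set_eqI)
    fix M
    show "M \<in> pgl_of A \<longleftrightarrow> M \<in> pgl_of B"
    proof
      assume "M \<in> pgl_of A"
      then obtain d where "d \<noteq> 0" "M = smat d A" by (auto simp: in_pgl_of)
      then have "M = smat (d*c) B" "d * c \<noteq> 0" using c by simp_all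
      then show "M \<in> pgl_of B" unfolding in_pgl_of by blast
    next
      assume "M \<in> pgl_of B"
      then obtain d where d: "d \<noteq> 0" "M = smat d B" by (auto simp: in_pgl_of)
      then have "M = smat (d/c) A" "d / c \<noteq> 0" using c by simp_all
      then show "M \<in> pgl_of A" unfolding in_pgl_of by blast
    qed
  qed
qed


lemma PGL2_mult: "mult PGL2 (pgl_of A) (pgl_of B) = pgl_of (A ** B)"
proof -
  have "{A' ** B' | A' B'. A' \<in> pgl_of A \<and> B' \<in> pgl_of B} = pgl_of (A ** B)"
  proof (rule Set.set_eqI, rule iffI)
    fix M assume "M \<in> {A' ** B' | A' B'. A' \<in> pgl_of A \<and> B' \<in> pgl_of B}"
    then obtain c d where "c \<noteq> 0" "d \<noteq> 0" "M = smat c A ** smat d B"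
      unfolding in_pgl_of by blast
    then have "M = smat (c*d) (A ** B)" "c * d \<noteq> 0" by (simp_all add: smat_mul)
    then show "M \<in> pgl_of (A ** B)" unfolding in_pgl_of by blast
  next
    fix M assume "M \<in> pgl_of (A ** B)"
    then obtain c where c: "c \<noteq> 0" "M = smat c (A ** B)" unfolding in_pgl_of by blast
    then have "M = smat c A ** smat 1 B" by (simp only: smat_mul mult_1_right)
    moreover have "smat c A \<in> pgl_of A" using c unfolding in_pgl_of by blast
    moreover have "smat 1 B \<in> pgl_of B" unfolding in_pgl_of by (rule exI[of _ 1]) simp
    ultimately show "M \<in> {A' ** B' | A' B'. A' \<in> pgl_of A \<and> B' \<in> pgl_of B}"
      by blast
  qed
  then show ?thesis by (simp add: PGL2_def)
qed

lemma PGL2_carrier: "carrier PGL2 = pgl_of ` GL2" by (simp add: PGL2_def)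
lemma PGL2_one: "one PGL2 = pgl_of (mat 1)" by (simp add: PGL2_def)

definition adj2 :: "'a::field^2^2 \<Rightarrow> 'a^2^2" where
  "adj2 A = mat2 (A$2$2) (-A$1$2) (-A$2$1) (A$1$1)"

lemma adj2_mul: "adj2 A ** A = smat (det A) (mat 1)"
proof -
  obtain a b c d where "A = mat2 a b c d" using mat2_eta by blast
  then show ?thesis by (simp add: adj2_def mat2_mul det_mat2 mat1_mat2 smat_mat2 algebra_simps)
qed

lemma det_adj2: "det (adj2 A) = det A"
  by (simp add: adj2_def det_mat2 det_2)

lemma group_PGL2: "group (PGL2 :: ('a::field^2^2) set monoid)"
proof (rule groupI)
  fix x y :: "('a^2^2) set" assume "x \<in> carrier PGL2" "y \<in> carrier PGL2"
  then show "x \<otimes>\<^bsub>PGL2\<^esub> y \<in> carrier PGL2"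
    by (auto simp: PGL2_carrier PGL2_mult GL2_def det_mul)
next
  show "\<one>\<^bsub>PGL2\<^esub> \<in> carrier PGL2" by (auto simp: PGL2_carrier PGL2_one GL2_def)
next
  fix x y z :: "('a^2^2) set" assume "x \<in> carrier PGL2" "y \<in> carrier PGL2" "z \<in> carrier PGL2"
  then show "x \<otimes>\<^bsub>PGL2\<^esub> y \<otimes>\<^bsub>PGL2\<^esub> z = x \<otimes>\<^bsub>PGL2\<^esub> (y \<otimes>\<^bsub>PGL2\<^esub> z)"
    by (auto simp: PGL2_carrier PGL2_mult matrix_mul_assoc)
next
  fix x :: "('a^2^2) set" assume "x \<in> carrier PGL2"
  then show "\<one>\<^bsub>PGL2\<^esub> \<otimes>\<^bsub>PGL2\<^esub> x = x"
    by (auto simp: PGL2_carrier PGL2_mult PGL2_one)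
next
  fix x :: "('a^2^2) set" assume "x \<in> carrier PGL2"
  then obtain A where A: "x = pgl_of A" "det A \<noteq> 0" by (auto simp: PGL2_carrier GL2_def)
  show "\<exists>y\<in>carrier PGL2. y \<otimes>\<^bsub>PGL2\<^esub> x = \<one>\<^bsub>PGL2\<^esub>"
  proof (intro bexI)
    show "pgl_of (adj2 A) \<otimes>\<^bsub>PGL2\<^esub> x = \<one>\<^bsub>PGL2\<^esub>"
      using A by (auto simp: PGL2_mult PGL2_one adj2_mul pgl_of_eq)
    show "pgl_of (adj2 A) \<in> carrier PGL2" using A by (auto simp: PGL2_carrier GL2_def det_adj2)
  qed
qed

lemma finite_PGL2: "finite (carrier (PGL2 :: ('a::{finite,field}^2^2) set monoid))"
  by (simp add: PGL2_carrier)


fun abseq :: "'a::field \<Rightarrow> 'a \<Rightarrow> nat \<Rightarrow> 'a \<times> 'a" where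
  "abseq lam mu 0 = (0,1)"
| "abseq lam mu (Suc k) = (snd (abseq lam mu k) - mu * fst (abseq lam mu k), - lam * fst (abseq lam mu k))"

definition lin :: "'a::field \<Rightarrow> 'a \<Rightarrow> 'a \<Rightarrow> 'a \<Rightarrow> 'a^2^2" where
  "lin lam mu a b = mat2 b a (-lam*a) (b - mu*a)"

lemma X_pow_mod:
  fixes lam mu :: "'a::field"
  shows "[:0,1:]^k mod [:lam,mu,1:] = [: snd (abseq lam mu k), fst (abseq lam mu k) :]"
proof (induction k)
  case 0
  have "degree (1::'a poly) < degree [:lam,mu,1:]" by simp
  then show ?case by (simp add: mod_poly_less)
next
  case (Suc k)
  define a where "a = fst (abseq lam mu k)"
  define b where "b = snd (abseq lam mu k)"
  have "[:0,1:]^Suc k mod [:lam,mu,1:] = ([:0,1:] * ([:0,1:]^k mod [:lam,mu,1:])) mod [:lam,mu,1:]"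
    by (metis mod_mult_right_eq power_Suc)
  also have "[:0,1:] * ([:0,1:]^k mod [:lam,mu,1:]) = [: -lam*a, b - mu*a :] + [:a:] * [:lam,mu,1:]"
    using Suc by (simp add: a_def b_def algebra_simps)
  also have "([: -lam*a, b - mu*a :] + [:a:] * [:lam,mu,1:]) mod [:lam,mu,1:] = [: -lam*a, b - mu*a :]"
  proof -
    have "([: -lam*a, b - mu*a :] + [:a:] * [:lam,mu,1:]) mod [:lam,mu,1:] = [: -lam*a, b - mu*a :] mod [:lam,mu,1:]"
      by (rule mod_mult_self1)
    also have "\<dots> = [: -lam*a, b - mu*a :]" by (rule mod_poly_less) simp
    finally show ?thesis .
  qed
  finally show ?case by (simp add: a_def b_def)
qed

lemma dvd_X_pow_iff:
  fixes lam mu :: "'a::field"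
  shows "[:lam,mu,1:] dvd (Polynomial.monom 1 e - 1) \<longleftrightarrow> abseq lam mu e = (0,1)"
proof -
  have "[:lam,mu,1:] dvd (Polynomial.monom 1 e - 1) \<longleftrightarrow> [:0,1:]^e mod [:lam,mu,1:] = 1 mod [:lam,mu,1:]"
    by (simp add: mod_eq_dvd_iff monom_altdef)
  also have "1 mod [:lam,mu,1:] = 1"
  proof -
    have "degree (1::'a poly) < degree [:lam,mu,1:]" by simp
    then show ?thesis by (simp add: mod_poly_less)
  qed
  finally show ?thesis by (auto simp: X_pow_mod one_pCons prod_eq_iff)
qed

lemma abseq_shift:
  "abseq lam mu n = abseq lam mu n' \<Longrightarrow> abseq lam mu (n+m) = abseq lam mu (n'+m)"
  by (induction m) auto

lemma abseq_nonzero: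
  fixes lam mu :: "'a::field"
  assumes "lam \<noteq> 0" shows "abseq lam mu k \<noteq> (0,0)"
  using assms by (induction k) (auto simp: prod_eq_iff)

lemma card_field_ge2: "CARD('a::{finite,field}) \<ge> 2"
proof -
  have "card {0::'a, 1} \<le> card (UNIV::'a set)" by (rule card_mono) auto
  then show ?thesis by simp
qed

context
  fixes lam mu :: "'a::{finite,field}"
  assumes prim: "primitive_poly [:lam,mu,1:]"
begin

definition NN :: nat where "NN = CARD('a)^2 - 1"

lemma NN_pos: "NN > 0"
proof -
  have "CARD('a)^2 \<ge> 2^2" using card_field_ge2 by (intro power_mono) auto
  then show ?thesis by (simp add: NN_def)
qed

lemma ab_NN: "abseq lam mu NN = (0,1)"
  using prim by (simp add: primitive_poly_def Let_def NN_def dvd_X_pow_iff power2_eq_square)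

lemma ab_lt_NN: "0 < e \<Longrightarrow> e < NN \<Longrightarrow> abseq lam mu e \<noteq> (0,1)"
  using prim by (simp add: primitive_poly_def Let_def NN_def dvd_X_pow_iff power2_eq_square)

lemma lam_nz: "lam \<noteq> 0"
proof
  assume "lam = 0"
  obtain m where "NN = Suc m" using NN_pos gr0_conv_Suc by blast
  then show False using ab_NN \<open>lam = 0\<close> by simp
qed


lemma ab_inj: "inj_on (abseq lam mu) {0..<NN}"
proof (rule inj_onI, rule ccontr)
  fix j k assume jk: "j \<in> {0..<NN}" "k \<in> {0..<NN}" "abseq lam mu j = abseq lam mu k" "j \<noteq> k"
  have *: False if jk: "j < NN" "k < NN" "abseq lam mu j = abseq lam mu k" "j < k" for j k
  proof -
    have "abseq lam mu (j + (NN - k)) = abseq lam mu (k + (NN - k))" by (rule abseq_shift[OF jk(3)])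
    also have "k + (NN - k) = NN" using jk(2) by simp
    also have "abseq lam mu NN = (0,1)" by (rule ab_NN)
    finally have e: "abseq lam mu (j + (NN - k)) = (0,1)" .
    have p: "0 < j + (NN - k)" using jk(2) by simp
    have q: "j + (NN - k) < NN" using jk(4) jk(2) by simp
    show False using ab_lt_NN[OF p q] e by (rule notE)
  qed
  show False
  proof (cases "j < k")
    case True then show False using *[of j k] jk by simp
  next
    case False then have "k < j" using jk(4) by simp
    then show False using *[of k j] jk by simp
  qed
qed

lemma ab_surj: "(a,b) \<noteq> (0,0) \<Longrightarrow> \<exists>k<NN. abseq lam mu k = (a,b)"
proof -
  assume ab: "(a,b) \<noteq> (0,0)"
  have sub: "abseq lam mu ` {0..<NN} \<subseteq> UNIV - {(0,0)}"
  proof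
    fix x assume "x \<in> abseq lam mu ` {0..<NN}"
    then obtain k where "x = abseq lam mu k" by (rule imageE)
    then show "x \<in> UNIV - {(0,0)}" using abseq_nonzero[OF lam_nz, of mu k] by simp
  qed
  have c1: "card (abseq lam mu ` {0..<NN}) = NN" using card_image[OF ab_inj] by simp
  have "card (UNIV :: ('a\<times>'a) set) = CARD('a) * CARD('a)"
    by (metis UNIV_Times_UNIV card_cartesian_product)
  then have c2: "card (UNIV - {(0::'a,0::'a)}) = NN"
    by (simp add: card_Diff_singleton NN_def power2_eq_square)
  have fin: "finite (UNIV - {(0::'a,0::'a)})" by simp
  have eq: "abseq lam mu ` {0..<NN} = UNIV - {(0,0)}"
    by (rule card_subset_eq[OF fin sub]) (simp add: c1 c2)
  have "(a,b) \<in> UNIV - {(0,0)}" using ab by simp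
  then have "(a,b) \<in> abseq lam mu ` {0..<NN}" by (simp only: eq)
  then obtain k where "k \<in> {0..<NN}" "(a,b) = abseq lam mu k" by (rule imageE)
  then show ?thesis by (intro exI[of _ k]) simp
qed


end


definition Rf :: "'a::field ring" where
  "Rf = \<lparr>carrier = UNIV, monoid.mult = (\<lambda>x y. x * y), one = 1, ring.zero = 0, add = (\<lambda>x y. x + y)\<rparr>"

lemma field_Rf: "field (Rf :: 'a::field ring)"
proof -
  have "\<exists>y. x + y = 0" for x :: 'a
    using add.right_inverse by blast
  moreover have "x \<noteq> 0 \<Longrightarrow> \<exists>y. x * y = 1" for x :: 'a
    by (rule exI[of _ "inverse x"]) auto
  ultimately show ?thesis
    unfolding Rf_def using add.right_inverse
    by unfold_locales (auto simp: algebra_simps Units_def)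
qed

lemma pow_Rf: "x [^]\<^bsub>mult_of Rf\<^esub> (n::nat) = (x::'a::field) ^ n"
  by (induction n) (simp_all add: Rf_def mult_of_def)

lemma gen_exists:
  "\<exists>t::'a::{finite,field}. t \<noteq> 0 \<and> (\<forall>n. t ^ n = 1 \<longleftrightarrow> (CARD('a) - 1) dvd n) \<and> (\<forall>y. y \<noteq> 0 \<longrightarrow> (\<exists>i. y = t ^ i))"
proof -
  interpret field "Rf :: 'a ring" by (rule field_Rf)
  have fin: "finite (carrier (Rf :: 'a ring))" by simp
  obtain a where a: "a \<in> carrier (mult_of (Rf::'a ring))"
    and gen: "carrier (mult_of (Rf::'a ring)) = {a[^]\<^bsub>Rf\<^esub>i | i::nat . i \<in> UNIV}"
    using finite_field_mult_group_has_gen[OF fin] by blast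
  have G: "group (mult_of (Rf::'a ring))" by (rule field_mult_group)
  have car: "carrier (mult_of (Rf::'a ring)) = UNIV - {0}" by (simp add: Rf_def)
  have gen': "carrier (mult_of (Rf::'a ring)) = {a[^]\<^bsub>mult_of Rf\<^esub>i | i::nat . i \<in> UNIV}"
    using gen by (simp add: nat_pow_mult_of)
  have "generate (mult_of (Rf::'a ring)) {a} = {a[^]\<^bsub>mult_of Rf\<^esub>i | i::nat . i \<in> UNIV}"
    by (rule group.generate_pow_on_finite_carrier[OF G]) (use a fin in simp_all)
  then have "group.ord (mult_of (Rf::'a ring)) a = card (UNIV - {0::'a})"
    using group.generate_pow_card[OF G a] gen' car by simp
  then have ord: "group.ord (mult_of (Rf::'a ring)) a = CARD('a) - 1"
    by (simp add: card_Diff_singleton)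
  have a0: "a \<noteq> 0" using a by (simp add: Rf_def)
  have "a ^ n = 1 \<longleftrightarrow> (CARD('a) - 1) dvd n" for n
  proof -
    have "a [^]\<^bsub>mult_of Rf\<^esub> n = \<one>\<^bsub>mult_of Rf\<^esub> \<longleftrightarrow> group.ord (mult_of (Rf::'a ring)) a dvd n"
      by (rule group.pow_eq_id[OF G a])
    then show ?thesis unfolding pow_Rf ord one_mult_of by (simp add: Rf_def)
  qed
  moreover have "\<exists>i. y = a ^ i" if "y \<noteq> 0" for y
  proof -
    have "y \<in> carrier (mult_of (Rf::'a ring))" using car that by simp
    then show ?thesis using gen' by (auto simp: pow_Rf)
  qed
  ultimately show ?thesis using a0 by blast
qed

context
  fixes lam mu :: "'a::{finite,field}"
  assumes prim: "primitive_poly [:lam,mu,1:]"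
begin

lemmas lamnz = lam_nz[OF prim]
lemmas absurj = ab_surj[OF prim]

abbreviation "Xm \<equiv> mat2 0 1 (-lam) (-mu)"
abbreviation "LL k \<equiv> lin lam mu (fst (abseq lam mu k)) (snd (abseq lam mu k))"

lemma LL_Suc: "LL k ** Xm = LL (Suc k)"
  by (simp add: lin_def mat2_mul algebra_simps)

lemma LL_0: "LL 0 = mat 1"
  by (simp add: lin_def mat1_mat2)

lemma LL_1: "LL 1 = Xm"
  by (simp add: lin_def)

lemma det_Xm: "det Xm = lam" by (simp add: det_mat2)

lemma det_LL: "det (LL k) = lam ^ k"
proof (induction k)
  case 0 then show ?case by (simp add: lin_def det_mat2)
next
  case (Suc k)
  have "det (LL (Suc k)) = det (LL k ** Xm)" by (simp only: LL_Suc)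
  also have "\<dots> = lam ^ Suc k" using Suc by (simp add: det_mul det_Xm del: abseq.simps)
  finally show ?case .
qed

lemma det_lin: "(a,b) \<noteq> (0,0) \<Longrightarrow> det (lin lam mu a b) \<noteq> 0"
proof -
  assume "(a,b) \<noteq> (0,0)"
  then obtain k where "abseq lam mu k = (a,b)" using absurj by blast
  then have "lin lam mu a b = LL k" by simp
  then show ?thesis using det_LL lamnz by simp
qed

lemma xbar_carrier: "pgl_of Xm \<in> carrier PGL2"
  using lamnz by (simp add: PGL2_carrier GL2_def det_Xm)

lemma xbar_pow: "pgl_of Xm [^]\<^bsub>PGL2\<^esub> k = pgl_of (LL k)"
proof (induction k)
  case 0 then show ?case by (simp add: PGL2_one lin_def mat1_mat2)
next
  case (Suc k)
  then show ?case by (simp add: PGL2_mult LL_Suc del: abseq.simps)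
qed
lemma C_eq: "generate PGL2 {pgl_of Xm} = {pgl_of (lin lam mu a b) | a b. (a,b) \<noteq> (0,0)}"
proof -
  have "generate PGL2 {pgl_of Xm} = {pgl_of Xm [^]\<^bsub>PGL2\<^esub> k | k. k \<in> (UNIV :: nat set)}"
    by (rule group.generate_pow_on_finite_carrier[OF group_PGL2 finite_PGL2 xbar_carrier])
  also have "\<dots> = {pgl_of (lin lam mu a b) | a b. (a,b) \<noteq> (0,0)}"
  proof (intro equalityI subsetI)
    fix x assume "x \<in> {pgl_of Xm [^]\<^bsub>PGL2\<^esub> k | k. k \<in> (UNIV :: nat set)}"
    then obtain k where "x = pgl_of (LL k)" by (auto simp: xbar_pow)
    moreover have "(fst (abseq lam mu k), snd (abseq lam mu k)) \<noteq> (0,0)"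
      using abseq_nonzero[OF lamnz, of mu k] by simp
    ultimately show "x \<in> {pgl_of (lin lam mu a b) | a b. (a,b) \<noteq> (0,0)}" by blast
  next
    fix x assume "x \<in> {pgl_of (lin lam mu a b) | a b. (a,b) \<noteq> (0,0)}"
    then obtain a b where "x = pgl_of (lin lam mu a b)" "(a,b) \<noteq> (0,0)" by blast
    moreover obtain k where "abseq lam mu k = (a,b)" using absurj \<open>(a,b) \<noteq> (0,0)\<close> by blast
    ultimately have "x = pgl_of Xm [^]\<^bsub>PGL2\<^esub> k" by (simp add: xbar_pow)
    then show "x \<in> {pgl_of Xm [^]\<^bsub>PGL2\<^esub> k | k. k \<in> (UNIV :: nat set)}" by blast
  qed
  finally show ?thesis .
qed

lemma smat_mat1_right: "M ** smat c (mat 1) = smat c M"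
proof -
  have "smat 1 M ** smat c (mat 1) = smat c M" by (simp only: smat_mul matrix_mul_rid mult_1_left)
  then show ?thesis by simp
qed

lemma smat_mul_left: "smat c M ** L = smat c (M ** L)"
proof -
  have "smat c M ** smat 1 L = smat c (M ** L)" by (simp only: smat_mul mult_1_right)
  then show ?thesis by simp
qed

lemma exist_factor:
  assumes M: "det M \<noteq> 0"
  shows "\<exists>B a b. det B \<noteq> 0 \<and> B$2$1 = 0 \<and> (a,b) \<noteq> (0,0) \<and> M = B ** lin lam mu a b"
proof -
  obtain m11 m12 m21 m22 where Me: "M = mat2 m11 m12 m21 m22" using mat2_eta by blast
  define a where "a = - m21 / lam"
  define b where "b = m22 + mu * a"
  have L21: "- lam * a = m21" using lamnz by (simp add: a_def)
  have L22: "b - mu * a = m22" by (simp add: b_def)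
  have ab: "(a,b) \<noteq> (0,0)"
  proof
    assume "(a,b) = (0,0)"
    then have "m21 = 0" "m22 = 0" using L21 L22 by auto
    then show False using M Me by (simp add: det_mat2)
  qed
  define L where "L = lin lam mu a b"
  have dL: "det L \<noteq> 0" using det_lin[OF ab] by (simp add: L_def)
  define B where "B = smat (1 / det L) (M ** adj2 L)"
  have "B ** L = smat (1 / det L) (M ** (adj2 L ** L))"
    by (simp add: B_def smat_mul_left matrix_mul_assoc)
  also have "\<dots> = M" using dL by (simp add: adj2_mul smat_mat1_right)
  finally have BL: "B ** L = M" .
  have la: "lam * a = - m21" by (metis L21 minus_minus mult_minus_left)
  have z: "m21 * (b - mu * a) + m22 * (lam * a) = 0" by (simp add: L22 la)
  have "B $ 2 $ 1 = (1 / det L) * (m21 * (b - mu * a) + m22 * (lam * a))"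
    unfolding B_def Me L_def lin_def adj2_def by (simp add: mat2_mul smat_mat2 algebra_simps)
  then have "B $ 2 $ 1 = 0" using z by simp
  moreover have "det B \<noteq> 0" using M dL BL det_mul[of B L] by auto
  ultimately show ?thesis using ab BL L_def by blast
qed

lemma unique_factor:
  assumes "det B1 \<noteq> 0" "B1$2$1 = 0" "B2$2$1 = 0" "(a1,b1) \<noteq> (0,0)"
    and eq: "pgl_of (B1 ** lin lam mu a1 b1) = pgl_of (B2 ** lin lam mu a2 b2)"
  shows "pgl_of (lin lam mu a1 b1) = pgl_of (lin lam mu a2 b2)"
proof -
  obtain p q r where B1: "B1 = mat2 p q 0 r" using mat2_eta[of B1] assms(2) by metis
  obtain p' q' r' where B2: "B2 = mat2 p' q' 0 r'" using mat2_eta[of B2] assms(3) by metis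
  have r: "r \<noteq> 0" using assms(1) by (simp add: B1 det_mat2)
  obtain c where c: "c \<noteq> 0" "B1 ** lin lam mu a1 b1 = smat c (B2 ** lin lam mu a2 b2)"
    using eq pgl_of_eq by blast
  then have e1: "r * (- lam * a1) = c * (r' * (- lam * a2))"
    and e2: "r * (b1 - mu * a1) = c * (r' * (b2 - mu * a2))"
    by (simp_all add: B1 B2 lin_def mat2_mul smat_mat2 mat2_eq_iff)
  define g where "g = c * r' / r"
  have ga: "a1 = g * a2" using e1 r lamnz by (simp add: g_def field_simps)
  have gb: "b1 = g * b2" using e2 ga r by (simp add: g_def field_simps)
  have g: "g \<noteq> 0" using assms(4) ga gb by auto
  have "lin lam mu a1 b1 = smat g (lin lam mu a2 b2)"
    by (simp add: lin_def smat_mat2 ga gb algebra_simps)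
  then show ?thesis using g pgl_of_eq by blast
qed


lemma xbar_in_C: "pgl_of Xm \<in> generate PGL2 {pgl_of Xm}"
  by (rule generate.incl) simp

lemma S_elem: "s \<in> upper_tri_PGL2 \<Longrightarrow> \<exists>A. s = pgl_of A \<and> det A \<noteq> 0 \<and> A$2$1 = 0"
  unfolding upper_tri_PGL2_def GL2_def by blast

lemma S_intro: "det A \<noteq> 0 \<Longrightarrow> A$2$1 = 0 \<Longrightarrow> pgl_of A \<in> upper_tri_PGL2"
  unfolding upper_tri_PGL2_def GL2_def by blast

lemma twist_char:
  assumes s: "s \<in> upper_tri_PGL2"
  shows "twist PGL2 (generate PGL2 {pgl_of Xm}) upper_tri_PGL2 (pgl_of Xm) s = pgl_of Xm
     \<longleftrightarrow> (\<exists>s'\<in>upper_tri_PGL2. pgl_of Xm \<otimes>\<^bsub>PGL2\<^esub> s = s' \<otimes>\<^bsub>PGL2\<^esub> pgl_of Xm)"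
proof -
  let ?C = "generate PGL2 {pgl_of Xm}" and ?S = "upper_tri_PGL2 :: ('a^2^2) set set"
  obtain A where A: "s = pgl_of A" "det A \<noteq> 0" "A$2$1 = 0" using S_elem[OF s] by blast
  have "det (Xm ** A) \<noteq> 0" using A lamnz by (simp add: det_mul det_Xm)
  then obtain B a b where B: "det B \<noteq> 0" "B$2$1 = 0" "(a,b) \<noteq> (0,0)" "Xm ** A = B ** lin lam mu a b"
    using exist_factor by blast
  define c0 where "c0 = pgl_of (lin lam mu a b)"
  define P where "P = (\<lambda>c. c \<in> ?C \<and> (\<exists>s'\<in>?S. pgl_of Xm \<otimes>\<^bsub>PGL2\<^esub> s = s' \<otimes>\<^bsub>PGL2\<^esub> c))"
  have P0: "P c0"
    unfolding P_def
  proof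
    show "c0 \<in> ?C" unfolding C_eq c0_def using B(3) by blast
    have "pgl_of B \<in> ?S" using S_intro[OF B(1) B(2)] .
    moreover have "pgl_of Xm \<otimes>\<^bsub>PGL2\<^esub> s = pgl_of B \<otimes>\<^bsub>PGL2\<^esub> c0"
      by (simp only: A(1) PGL2_mult B(4) c0_def)
    ultimately show "\<exists>s'\<in>?S. pgl_of Xm \<otimes>\<^bsub>PGL2\<^esub> s = s' \<otimes>\<^bsub>PGL2\<^esub> c0" by blast
  qed
  have uniq: "c = c0" if Pc: "P c" for c
  proof -
    have "c \<in> ?C" using Pc unfolding P_def by blast
    then obtain a' b' where c: "c = pgl_of (lin lam mu a' b')" "(a',b') \<noteq> (0,0)"
      unfolding C_eq by blast
    from Pc obtain s' where s': "s' \<in> ?S" "pgl_of Xm \<otimes>\<^bsub>PGL2\<^esub> s = s' \<otimes>\<^bsub>PGL2\<^esub> c"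
      unfolding P_def by blast
    obtain B' where B': "s' = pgl_of B'" "det B' \<noteq> 0" "B'$2$1 = 0" using S_elem[OF s'(1)] by blast
    have "pgl_of (B' ** lin lam mu a' b') = pgl_of Xm \<otimes>\<^bsub>PGL2\<^esub> s"
      using s'(2) by (simp only: B'(1) c(1) PGL2_mult)
    also have "\<dots> = pgl_of (B ** lin lam mu a b)"
      by (simp only: A(1) PGL2_mult B(4))
    finally have "pgl_of (B' ** lin lam mu a' b') = pgl_of (B ** lin lam mu a b)" .
    then have "pgl_of (lin lam mu a' b') = pgl_of (lin lam mu a b)"
      by (rule unique_factor[OF B'(2) B'(3) B(2) c(2)])
    then show "c = c0" by (simp only: c(1) c0_def)
  qed
  have tw: "twist PGL2 ?C ?S (pgl_of Xm) s = c0"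
    unfolding twist_def
  proof (rule the_equality)
    show "c0 \<in> ?C \<and> (\<exists>s'\<in>?S. pgl_of Xm \<otimes>\<^bsub>PGL2\<^esub> s = s' \<otimes>\<^bsub>PGL2\<^esub> c0)" using P0 unfolding P_def .
    fix c assume "c \<in> ?C \<and> (\<exists>s'\<in>?S. pgl_of Xm \<otimes>\<^bsub>PGL2\<^esub> s = s' \<otimes>\<^bsub>PGL2\<^esub> c)"
    then show "c = c0" using uniq unfolding P_def by blast
  qed
  show ?thesis
  proof
    assume "twist PGL2 ?C ?S (pgl_of Xm) s = pgl_of Xm"
    then have "c0 = pgl_of Xm" using tw by simp
    then show "\<exists>s'\<in>?S. pgl_of Xm \<otimes>\<^bsub>PGL2\<^esub> s = s' \<otimes>\<^bsub>PGL2\<^esub> pgl_of Xm"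
      using P0 unfolding P_def by blast
  next
    assume "\<exists>s'\<in>?S. pgl_of Xm \<otimes>\<^bsub>PGL2\<^esub> s = s' \<otimes>\<^bsub>PGL2\<^esub> pgl_of Xm"
    then have "P (pgl_of Xm)" unfolding P_def using xbar_in_C by blast
    then have "pgl_of Xm = c0" by (rule uniq)
    then show "twist PGL2 ?C ?S (pgl_of Xm) s = pgl_of Xm" using tw by simp
  qed
qed

definition Tset :: "('a^2^2) set set" where
  "Tset = {pgl_of A | A. det A \<noteq> 0 \<and> A$2$1 = 0 \<and> lam * A$1$2 = mu * (A$1$1 - A$2$2)}"

lemma stab_eq:
  "{s \<in> upper_tri_PGL2. twist PGL2 (generate PGL2 {pgl_of Xm}) upper_tri_PGL2 (pgl_of Xm) s = pgl_of Xm}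
   = Tset"
proof (rule Set.set_eqI, rule iffI)
  fix s assume "s \<in> {s \<in> upper_tri_PGL2. twist PGL2 (generate PGL2 {pgl_of Xm}) upper_tri_PGL2 (pgl_of Xm) s = pgl_of Xm}"
  then have s: "s \<in> upper_tri_PGL2"
    and "\<exists>s'\<in>upper_tri_PGL2. pgl_of Xm \<otimes>\<^bsub>PGL2\<^esub> s = s' \<otimes>\<^bsub>PGL2\<^esub> pgl_of Xm"
    using twist_char by blast+
  then obtain s' where s': "s' \<in> upper_tri_PGL2" "pgl_of Xm \<otimes>\<^bsub>PGL2\<^esub> s = s' \<otimes>\<^bsub>PGL2\<^esub> pgl_of Xm" by blast
  obtain A where A: "s = pgl_of A" "det A \<noteq> 0" "A$2$1 = 0" using S_elem[OF s] by blast
  obtain B where B: "s' = pgl_of B" "det B \<noteq> 0" "B$2$1 = 0" using S_elem[OF s'(1)] by blast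
  have "pgl_of (Xm ** A) = pgl_of (B ** Xm)" using s'(2) by (simp only: A(1) B(1) PGL2_mult)
  then obtain c where c: "c \<noteq> 0" "Xm ** A = smat c (B ** Xm)" using pgl_of_eq by blast
  obtain a1 b1 d1 where Ae: "A = mat2 a1 b1 0 d1" using mat2_eta[of A] A(3) by metis
  obtain p q r where Be: "B = mat2 p q 0 r" using mat2_eta[of B] B(3) by metis
  from c(2) have f1: "(Xm ** A)$2$1 = (smat c (B ** Xm))$2$1" by simp
  from c(2) have f2: "(Xm ** A)$2$2 = (smat c (B ** Xm))$2$2" by simp
  from f1 have e1: "- lam * a1 = c * (- lam * r)" by (simp add: Ae Be mat2_mul smat_mat2)
  from f2 have e2: "- lam * b1 - mu * d1 = c * (- mu * r)" by (simp add: Ae Be mat2_mul smat_mat2)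
  from e1 lamnz have "a1 = c * r" by simp
  with e2 have "lam * b1 = mu * (a1 - d1)" by (simp add: algebra_simps)
  then have "lam * A$1$2 = mu * (A$1$1 - A$2$2)" by (simp add: Ae)
  then show "s \<in> Tset" unfolding Tset_def using A by blast
next
  fix s assume "s \<in> Tset"
  then obtain A where A: "s = pgl_of A" "det A \<noteq> 0" "A$2$1 = 0" "lam * A$1$2 = mu * (A$1$1 - A$2$2)"
    unfolding Tset_def by blast
  obtain a1 b1 d1 where Ae: "A = mat2 a1 b1 0 d1" using mat2_eta[of A] A(3) by metis
  have dA: "a1 * d1 \<noteq> 0" using A(2) by (simp add: Ae det_mat2)
  have rel: "lam * b1 = mu * (a1 - d1)" using A(4) by (simp add: Ae)
  have s: "s \<in> upper_tri_PGL2" using S_intro[OF A(2) A(3)] A(1) by simp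
  have s': "pgl_of (mat2 d1 0 0 a1) \<in> upper_tri_PGL2"
    by (rule S_intro) (use dA in \<open>simp_all add: det_mat2 mult.commute\<close>)
  have "Xm ** A = mat2 d1 0 0 a1 ** Xm"
    using rel by (simp add: Ae mat2_mul mat2_eq_iff algebra_simps)
  then have "pgl_of Xm \<otimes>\<^bsub>PGL2\<^esub> s = pgl_of (mat2 d1 0 0 a1) \<otimes>\<^bsub>PGL2\<^esub> pgl_of Xm"
    by (simp only: A(1) PGL2_mult)
  then have "\<exists>s'\<in>upper_tri_PGL2. pgl_of Xm \<otimes>\<^bsub>PGL2\<^esub> s = s' \<otimes>\<^bsub>PGL2\<^esub> pgl_of Xm"
    using s' by blast
  then show "s \<in> {s \<in> upper_tri_PGL2. twist PGL2 (generate PGL2 {pgl_of Xm}) upper_tri_PGL2 (pgl_of Xm) s = pgl_of Xm}"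
    using twist_char[OF s] s by blast
qed

definition Dm :: "'a \<Rightarrow> 'a^2^2" where "Dm u = mat2 u (mu * (u - 1) / lam) 0 1"

lemma Dm_mul: "Dm u ** Dm v = Dm (u * v)"
proof -
  have "u * (mu * (v - 1) / lam) + mu * (u - 1) / lam = mu * (u * v - 1) / lam"
    using lamnz by (simp add: field_simps)
  then show ?thesis by (simp add: Dm_def mat2_mul)
qed

lemma Dm_T: "u \<noteq> 0 \<Longrightarrow> pgl_of (Dm u) \<in> Tset"
proof -
  assume u: "u \<noteq> 0"
  have "det (Dm u) \<noteq> 0" using u by (simp add: Dm_def det_mat2)
  moreover have "Dm u $2$1 = 0" by (simp add: Dm_def)
  moreover have "lam * Dm u $1$2 = mu * (Dm u $1$1 - Dm u $2$2)" using lamnz by (simp add: Dm_def)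
  ultimately show ?thesis unfolding Tset_def by blast
qed

lemma main_iso:
  "PGL2\<lparr>carrier := {s \<in> upper_tri_PGL2. twist PGL2 (generate PGL2 {pgl_of Xm}) upper_tri_PGL2 (pgl_of Xm) s = pgl_of Xm}\<rparr>
    \<cong> integer_mod_group (CARD('a) - 1)"
proof -
  obtain t :: 'a where t: "t \<noteq> 0" "\<forall>n. t^n = 1 \<longleftrightarrow> (CARD('a) - 1) dvd n" "\<forall>y. y \<noteq> 0 \<longrightarrow> (\<exists>i. y = t^i)"
    using gen_exists by blast
  define n where "n = CARD('a) - 1"
  have npos: "n > 0" using card_field_ge2[where 'a='a] by (simp add: n_def)
  have tn: "t ^ n = 1" using t(2) n_def by simp
  have tmod: "t ^ (m mod n) = t ^ m" for m
  proof -
    have "t ^ m = t ^ (n * (m div n) + m mod n)" by simp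
    also have "\<dots> = (t ^ n) ^ (m div n) * t ^ (m mod n)" by (simp only: power_add power_mult)
    finally show ?thesis using tn by simp
  qed
  have aux: False if ij: "i < j" "j < n" "t^i = t^j" for i j
  proof -
    have "t ^ j = t ^ i * t ^ (j - i)" using ij(1) by (simp flip: power_add)
    then have "t ^ i * t ^ (j - i) = t ^ i * 1" using ij(3) by simp
    then have "t ^ (j - i) = 1" using t(1) by simp
    then have "n dvd (j - i)" using t(2) n_def by simp
    moreover have "0 < j - i" "j - i < n" using ij by auto
    ultimately show False using dvd_imp_le by fastforce
  qed
  have tinj: "i = j" if "i < n" "j < n" "t^i = t^j" for i j
  proof (rule ccontr)
    assume "i \<noteq> j"
    then show False
    proof (cases "i < j")
      case True then show False using aux[of i j] that by simp
    next
      case False then have "j < i" using \<open>i \<noteq> j\<close> by simp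
      then show False using aux[of j i] that by simp
    qed
  qed
  define phi where "phi k = pgl_of (Dm (t ^ nat k))" for k :: int
  let ?Z = "integer_mod_group n"
  let ?H = "PGL2\<lparr>carrier := Tset\<rparr>"
  have carZ: "carrier ?Z = {0..<int n}" using npos by (simp add: carrier_integer_mod_group)
  have phiT: "phi k \<in> Tset" for k
    unfolding phi_def by (rule Dm_T) (use t(1) in simp)
  have hom: "phi \<in> hom ?Z ?H"
  proof (rule homI)
    fix x assume "x \<in> carrier ?Z" then show "phi x \<in> carrier ?H" using phiT by simp
  next
    fix x y assume x: "x \<in> carrier ?Z" and y: "y \<in> carrier ?Z"
    obtain i where i: "x = int i" using x carZ by (metis atLeastLessThan_iff nonneg_int_cases)
    obtain j where j: "y = int j" using y carZ by (metis atLeastLessThan_iff nonneg_int_cases)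
    have "x \<otimes>\<^bsub>?Z\<^esub> y = int ((i + j) mod n)" by (simp add: i j of_nat_mod)
    then have "phi (x \<otimes>\<^bsub>?Z\<^esub> y) = pgl_of (Dm (t ^ i * t ^ j))"
      by (simp add: phi_def tmod power_add)
    also have "\<dots> = phi x \<otimes>\<^bsub>PGL2\<^esub> phi y"
      by (simp add: phi_def i j PGL2_mult Dm_mul)
    finally show "phi (x \<otimes>\<^bsub>?Z\<^esub> y) = phi x \<otimes>\<^bsub>?H\<^esub> phi y" by simp
  qed
  have inj: "inj_on phi {0..<int n}"
  proof (rule inj_onI)
    fix x y assume x: "x \<in> {0..<int n}" and y: "y \<in> {0..<int n}" and eq: "phi x = phi y"
    obtain i where i: "x = int i" "i < n" using x by (metis atLeastLessThan_iff nonneg_int_cases of_nat_less_iff)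
    obtain j where j: "y = int j" "j < n" using y by (metis atLeastLessThan_iff nonneg_int_cases of_nat_less_iff)
    from eq obtain c where c: "c \<noteq> 0" "Dm (t^i) = smat c (Dm (t^j))"
      unfolding phi_def i j pgl_of_eq by auto
    from c(2) have "Dm (t^i) $2$2 = smat c (Dm (t^j)) $2$2" by simp
    then have c1: "c = 1" by (simp add: Dm_def smat_mat2)
    from c(2) have "Dm (t^i) $1$1 = smat c (Dm (t^j)) $1$1" by simp
    then have "t^i = t^j" using c1 by (simp add: Dm_def smat_mat2)
    then have "i = j" using tinj i j by blast
    then show "x = y" using i j by simp
  qed
  have img: "phi ` {0..<int n} = Tset"
  proof (rule Set.set_eqI, rule iffI)
    fix s assume "s \<in> phi ` {0..<int n}" then show "s \<in> Tset" using phiT by blast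
  next
    fix s assume "s \<in> Tset"
    then obtain A where A: "s = pgl_of A" "det A \<noteq> 0" "A$2$1 = 0" "lam * A$1$2 = mu * (A$1$1 - A$2$2)"
      unfolding Tset_def by blast
    obtain a1 b1 d1 where Ae: "A = mat2 a1 b1 0 d1" using mat2_eta[of A] A(3) by metis
    have dA: "a1 \<noteq> 0" "d1 \<noteq> 0" using A(2) by (simp_all add: Ae det_mat2)
    have rel: "lam * b1 = mu * (a1 - d1)" using A(4) by (simp add: Ae)
    have "a1 / d1 \<noteq> 0" using dA by simp
    then obtain i where ui: "a1 / d1 = t ^ i" using t(3) by blast
    define k where "k = i mod n"
    have uk: "a1 / d1 = t ^ k" using ui tmod k_def by simp
    have kn: "k < n" using npos k_def by simp
    have "A = smat d1 (Dm (a1 / d1))"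
    proof -
      have r2: "b1 * lam + d1 * mu = a1 * mu" using rel by (simp add: algebra_simps)
      have key: "a1 * (d1 * mu) = b1 * (d1 * lam) + d1 * (d1 * mu)"
      proof -
        have "b1 * (d1 * lam) + d1 * (d1 * mu) = d1 * (b1 * lam + d1 * mu)" by (simp add: algebra_simps)
        also have "\<dots> = d1 * (a1 * mu)" by (simp only: r2)
        also have "\<dots> = a1 * (d1 * mu)" by (simp add: algebra_simps)
        finally show ?thesis by simp
      qed
      have "d1 * (mu * (a1 / d1 - 1) / lam) = b1"
        using dA lamnz key by (simp add: field_simps)
      then show ?thesis using dA by (simp add: Ae Dm_def smat_mat2)
    qed
    then have "s = phi (int k)" unfolding phi_def A(1) uk using dA pgl_of_eq by auto
    moreover have "int k \<in> {0..<int n}" using kn by simp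
    ultimately show "s \<in> phi ` {0..<int n}" by blast
  qed
  have "phi \<in> iso ?Z ?H"
    unfolding iso_def bij_betw_def using hom inj img carZ by simp
  then have "?Z \<cong> ?H" by (rule is_isoI)
  then have "?H \<cong> ?Z" by (rule group.iso_sym[OF group_integer_mod_group])
  then show ?thesis by (simp add: stab_eq n_def)
qed

end


theorem mainTheorem5:
  fixes mu lam :: "'a::{finite,field}"
  assumes "primitive_poly [:lam, mu, 1:]"
  defines "xbar \<equiv> pgl_of (mat2 0 1 (- lam) (- mu))"
  defines "C \<equiv> generate PGL2 {xbar}"
  defines "S \<equiv> (upper_tri_PGL2 :: ('a ^2^2) set set)"
  shows "PGL2 \<lparr> carrier := {s \<in> S. twist PGL2 C S xbar s = xbar} \<rparr>
           \<cong> integer_mod_group (CARD('a) - 1)"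
  unfolding xbar_def C_def S_def by (rule main_iso[OF assms(1)])

end
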